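(* Let $G$ be a graph. If $G$ admits a radial subtree model $(T,\mathcal{S})$, then $G$ is a leaf power.
   Context: A subtree model of a graph $G$ is a pair $(T,\mathcal{S})$ where $T$ is a tree and $\mathcal{S}=\{S_v \mid v\in V(G)\}$ is a family of connected subtrees of $T$ such that for any two distinct vertices $u,v$, $S_u\cap S_v\neq\emptyset$ if and only if $uv\in E(G)$. A radial subtree model (RS model) is a subtree model in which for each $v\in V(G)$ there is a node $c_v\in V(T)$ (center) and an integer $r_v\ge 0$ (radius) such that $S_v$ is the subtree of $T$ induced by exactly the nodes at distance at most $r_v$ from $c_v$. For a positive integer $k$, $G$ is a $k$-leaf power if there is a tree $T'$ and a bijection $\tau$ from $V(G)$ to the set of leaves of $T'$ such that distinct $u,v$ are adjacent in $G$ iff $\tau(u),\tau(v)$ are at distance at most $k$ in $T'$. $G$ is a leaf power if it is a $k$-leaf power for some positive integer $k$. *)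

theory Defs
  imports Main
begin

definition graph :: "'a set \<Rightarrow> ('a \<Rightarrow> 'a \<Rightarrow> bool) \<Rightarrow> bool" where
  "graph V E \<longleftrightarrow> finite V \<and> V \<noteq> {}
     \<and> (\<forall>u v. E u v \<longrightarrow> u \<in> V \<and> v \<in> V)
     \<and> (\<forall>u v. E u v \<longrightarrow> E v u) \<and> (\<forall>u. \<not> E u u)"

definition walk :: "('b \<Rightarrow> 'b \<Rightarrow> bool) \<Rightarrow> 'b list \<Rightarrow> bool" where
  "walk E xs \<longleftrightarrow> xs \<noteq> [] \<and> (\<forall>i. Suc i < length xs \<longrightarrow> E (xs ! i) (xs ! Suc i))"

definition path :: "('b \<Rightarrow> 'b \<Rightarrow> bool) \<Rightarrow> 'b list \<Rightarrow> bool" where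
  "path E xs \<longleftrightarrow> walk E xs \<and> distinct xs"

definition tree :: "'b set \<Rightarrow> ('b \<Rightarrow> 'b \<Rightarrow> bool) \<Rightarrow> bool" where
  "tree N E \<longleftrightarrow> graph N E \<and>
     (\<forall>x\<in>N. \<forall>y\<in>N. \<exists>!xs. path E xs \<and> hd xs = x \<and> last xs = y)"

definition tdist :: "('b \<Rightarrow> 'b \<Rightarrow> bool) \<Rightarrow> 'b \<Rightarrow> 'b \<Rightarrow> nat" where
  "tdist E x y = (LEAST n. \<exists>xs. walk E xs \<and> hd xs = x \<and> last xs = y \<and> length xs = Suc n)"

definition subtree :: "'b set \<Rightarrow> ('b \<Rightarrow> 'b \<Rightarrow> bool) \<Rightarrow> 'b set \<Rightarrow> bool" where
  "subtree N E S \<longleftrightarrow> S \<noteq> {} \<and> S \<subseteq> N \<and>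
     (\<forall>x\<in>S. \<forall>y\<in>S. \<exists>xs. walk E xs \<and> hd xs = x \<and> last xs = y \<and> set xs \<subseteq> S)"

definition subtree_model ::
  "'a set \<Rightarrow> ('a \<Rightarrow> 'a \<Rightarrow> bool) \<Rightarrow> 'b set \<Rightarrow> ('b \<Rightarrow> 'b \<Rightarrow> bool) \<Rightarrow> ('a \<Rightarrow> 'b set) \<Rightarrow> bool" where
  "subtree_model V G N E S \<longleftrightarrow> tree N E \<and> (\<forall>v\<in>V. subtree N E (S v)) \<and>
     (\<forall>u\<in>V. \<forall>v\<in>V. u \<noteq> v \<longrightarrow> (S u \<inter> S v \<noteq> {} \<longleftrightarrow> G u v))"

definition radial_subtree_model ::
  "'a set \<Rightarrow> ('a \<Rightarrow> 'a \<Rightarrow> bool) \<Rightarrow> 'b set \<Rightarrow> ('b \<Rightarrow> 'b \<Rightarrow> bool) \<Rightarrow> ('a \<Rightarrow> 'b set) \<Rightarrow> bool" where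
  "radial_subtree_model V G N E S \<longleftrightarrow> subtree_model V G N E S \<and>
     (\<forall>v\<in>V. \<exists>c\<in>N. \<exists>r::nat. S v = {t \<in> N. tdist E c t \<le> r})"

text \<open>Leaves: nodes of degree at most one (so a one-node tree has one leaf).\<close>
definition leaves :: "'b set \<Rightarrow> ('b \<Rightarrow> 'b \<Rightarrow> bool) \<Rightarrow> 'b set" where
  "leaves N E = {x \<in> N. card {y \<in> N. E x y} \<le> 1}"

definition k_leaf_power :: "nat \<Rightarrow> 'a set \<Rightarrow> ('a \<Rightarrow> 'a \<Rightarrow> bool) \<Rightarrow> bool" where
  "k_leaf_power k V G \<longleftrightarrow> (\<exists>(N :: nat set) E \<tau>. tree N E \<and> bij_betw \<tau> V (leaves N E) \<and>
     (\<forall>u\<in>V. \<forall>v\<in>V. u \<noteq> v \<longrightarrow> (G u v \<longleftrightarrow> tdist E (\<tau> u) (\<tau> v) \<le> k)))"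

definition leaf_power :: "'a set \<Rightarrow> ('a \<Rightarrow> 'a \<Rightarrow> bool) \<Rightarrow> bool" where
  "leaf_power V G \<longleftrightarrow> (\<exists>k>0. k_leaf_power k V G)"

end

theory Submission
  imports Defs
begin


fun wk :: "('b \<Rightarrow> 'b \<Rightarrow> bool) \<Rightarrow> 'b list \<Rightarrow> bool" where
  "wk E [] = False"
| "wk E [x] = True"
| "wk E (x # y # xs) = (E x y \<and> wk E (y # xs))"

lemma walk_Cons_Cons: "walk E (x # y # xs) = (E x y \<and> walk E (y # xs))"
proof
  assume h: "walk E (x # y # xs)"
  then have A: "\<forall>i. Suc i < length (x # y # xs) \<longrightarrow> E ((x # y # xs) ! i) ((x # y # xs) ! Suc i)"
    unfolding walk_def by blast
  have "E x y" using A[rule_format, of 0] by simp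
  moreover have "\<forall>i. Suc i < length (y # xs) \<longrightarrow> E ((y # xs) ! i) ((y # xs) ! Suc i)"
  proof (intro allI impI)
    fix i assume "Suc i < length (y # xs)"
    then show "E ((y # xs) ! i) ((y # xs) ! Suc i)" using A[rule_format, of "Suc i"] by simp
  qed
  ultimately show "E x y \<and> walk E (y # xs)" unfolding walk_def by blast
next
  assume h: "E x y \<and> walk E (y # xs)"
  then have A: "\<forall>i. Suc i < length (y # xs) \<longrightarrow> E ((y # xs) ! i) ((y # xs) ! Suc i)"
    unfolding walk_def by blast
  have "\<forall>i. Suc i < length (x # y # xs) \<longrightarrow> E ((x # y # xs) ! i) ((x # y # xs) ! Suc i)"
  proof (intro allI impI)
    fix i assume i: "Suc i < length (x # y # xs)"
    show "E ((x # y # xs) ! i) ((x # y # xs) ! Suc i)"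
    proof (cases i)
      case 0 then show ?thesis using h by simp
    next
      case (Suc j) then show ?thesis using A[rule_format, of j] i by simp
    qed
  qed
  then show "walk E (x # y # xs)" unfolding walk_def by blast
qed

lemma walk_wk: "walk E xs = wk E xs"
proof (induction E xs rule: wk.induct)
  case (3 E x y xs) then show ?case by (simp only: walk_Cons_Cons wk.simps)
qed (simp_all add: walk_def)

lemma wk_ne: "wk E xs \<Longrightarrow> xs \<noteq> []" by auto

lemma wk_Cons: "wk E (x # xs) = (xs = [] \<or> (E x (hd xs) \<and> wk E xs))"
  by (cases xs) auto

lemma wk_append:
  "xs \<noteq> [] \<Longrightarrow> ys \<noteq> [] \<Longrightarrow> wk E (xs @ ys) = (wk E xs \<and> wk E ys \<and> E (last xs) (hd ys))"
proof (induction xs)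
  case Nil then show ?case by simp
next
  case (Cons a xs)
  show ?case
  proof (cases "xs = []")
    case True then show ?thesis using Cons by (cases ys) auto
  next
    case False then show ?thesis using Cons by (cases xs) auto
  qed
qed

lemma wk_rev: "(\<And>a b. E a b \<Longrightarrow> E b a) \<Longrightarrow> wk E xs \<Longrightarrow> wk E (rev xs)"
proof (induction xs)
  case Nil then show ?case by simp
next
  case (Cons a xs)
  show ?case
  proof (cases "xs = []")
    case True then show ?thesis by simp
  next
    case False
    then have "wk E xs" "E a (hd xs)" using Cons by (auto simp: wk_Cons)
    moreover have "E (hd xs) a" using Cons(2) \<open>E a (hd xs)\<close> by blast
    ultimately show ?thesis using Cons False by (simp add: wk_append last_rev hd_rev)
  qed
qed

lemma wk_set: "wk E xs \<Longrightarrow> (\<And>a b. E a b \<Longrightarrow> a \<in> N \<and> b \<in> N) \<Longrightarrow> hd xs \<in> N \<Longrightarrow> set xs \<subseteq> N"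
  by (induction E xs rule: wk.induct) auto

lemma wk_glue: "wk E a \<Longrightarrow> wk E b \<Longrightarrow> last a = hd b \<Longrightarrow> wk E (a @ tl b)"
  apply (cases b; simp)
  subgoal for x b' by (cases b') (auto simp: wk_append wk_ne)
  done

lemma wk_take: "wk E xs \<Longrightarrow> 0 < n \<Longrightarrow> wk E (take n xs)"
proof (induction E xs arbitrary: n rule: wk.induct)
  case (3 E x y xs)
  show ?case
  proof (cases n)
    case 0 then show ?thesis using 3 by simp
  next
    case (Suc m)
    show ?thesis
    proof (cases m)
      case 0 then show ?thesis using Suc by simp
    next
      case (Suc m')
      have "wk E (take (Suc m') (y # xs))" using "3.IH"[of "Suc m'"] "3.prems" by simp
      then have "wk E (y # take m' xs)" by simp
      then show ?thesis using 3 \<open>n = Suc m\<close> Suc by simp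
    qed
  qed
qed auto

lemma wk_drop: "wk E xs \<Longrightarrow> n < length xs \<Longrightarrow> wk E (drop n xs)"
proof (induction E xs arbitrary: n rule: wk.induct)
  case (3 E x y xs)
  then show ?case by (cases n) auto
qed auto

lemma wk_mono: "wk E xs \<Longrightarrow> (\<And>a b. a \<in> set xs \<Longrightarrow> b \<in> set xs \<Longrightarrow> E a b \<Longrightarrow> E' a b) \<Longrightarrow> wk E' xs"
  by (induction E xs rule: wk.induct) auto

lemma wk_map: "wk E xs \<Longrightarrow> (\<And>a b. a \<in> set xs \<Longrightarrow> b \<in> set xs \<Longrightarrow> E a b \<Longrightarrow> E' (f a) (f b)) \<Longrightarrow> wk E' (map f xs)"
  by (induction E xs rule: wk.induct) auto

lemma wk_upt: "a < b \<Longrightarrow> (\<And>i. a \<le> i \<Longrightarrow> Suc i < b \<Longrightarrow> E (g i) (g (Suc i))) \<Longrightarrow> wk E (map g [a..<b])"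
proof (induction b rule: nat_less_induct)
  case (1 b)
  show ?case
  proof (cases "Suc a = b")
    case True then show ?thesis by (simp add: True[symmetric])
  next
    case False
    then obtain c where c: "b = Suc c" "a < c" using 1(2) by (cases b) auto
    have "wk E (map g [a..<c])" using 1 c by auto
    moreover have "map g [a..<b] = map g [a..<c] @ [g c]" using c by simp
    moreover have "last (map g [a..<c]) = g (c - 1)" using c by (simp add: last_map)
    moreover have "E (g (c - 1)) (g c)" using 1(3)[of "c - 1"] c by simp
    ultimately show ?thesis using c by (simp add: wk_append)
  qed
qed



lemma graphD:
  assumes "graph N E"
  shows "finite N" "N \<noteq> {}" "E a b \<Longrightarrow> a \<in> N" "E a b \<Longrightarrow> b \<in> N" "E a b \<Longrightarrow> E b a" "\<not> E a a"
  using assms unfolding graph_def by blast+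

lemma path_wk: "path E xs = (wk E xs \<and> distinct xs)"
  by (simp add: path_def walk_wk)

lemma tdist_le:
  assumes "wk E xs" "hd xs = x" "last xs = y"
  shows "tdist E x y \<le> length xs - 1"
proof -
  have "\<exists>xs'. walk E xs' \<and> hd xs' = x \<and> last xs' = y \<and> length xs' = Suc (length xs - 1)"
    using assms wk_ne[OF assms(1)] by (intro exI[of _ xs]) (auto simp: walk_wk)
  then show ?thesis unfolding tdist_def by (rule Least_le)
qed

lemma tdist_ex:
  assumes "wk E xs" "hd xs = x" "last xs = y"
  shows "\<exists>ws. wk E ws \<and> hd ws = x \<and> last ws = y \<and> length ws = Suc (tdist E x y)"
proof -
  have "\<exists>xs'. walk E xs' \<and> hd xs' = x \<and> last xs' = y \<and> length xs' = Suc (length xs - 1)"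
    using assms wk_ne[OF assms(1)] by (intro exI[of _ xs]) (auto simp: walk_wk)
  then have "\<exists>xs'. walk E xs' \<and> hd xs' = x \<and> last xs' = y \<and> length xs' = Suc (tdist E x y)"
    unfolding tdist_def by (rule LeastI)
  then show ?thesis by (simp add: walk_wk)
qed

lemma shortcut:
  "wk E ws \<Longrightarrow> \<exists>ps. wk E ps \<and> distinct ps \<and> hd ps = hd ws \<and> last ps = last ws \<and> length ps \<le> length ws"
proof (induction "length ws" arbitrary: ws rule: less_induct)
  case less
  show ?case
  proof (cases "distinct ws")
    case True then show ?thesis using less by blast
  next
    case False
    then obtain xs ys zs y where ws: "ws = xs @ [y] @ ys @ [y] @ zs" using not_distinct_decomp by blast
    have A: "wk E (xs @ [y])" using less(2) ws wk_take[of E ws "length xs + 1"] by simp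
    have B: "wk E (y # zs)" using less(2) ws wk_drop[of E ws "length xs + 1 + length ys"] by simp
    have C: "wk E ((xs @ [y]) @ tl (y # zs))" by (rule wk_glue[OF A B]) simp
    let ?w = "xs @ [y] @ zs"
    have "wk E ?w" using C by simp
    moreover have "length ?w < length ws" using ws by simp
    moreover have "hd ?w = hd ws" using ws by (cases xs) auto
    moreover have "last ?w = last ws" using ws by (cases zs rule: rev_cases) auto
    ultimately show ?thesis using less(1)[of ?w] by force
  qed
qed

lemma tree_graph: "tree N E \<Longrightarrow> graph N E" by (simp add: tree_def)

lemma tree_unique:
  assumes "tree N E" "x \<in> N" "y \<in> N"
    "path E p" "hd p = x" "last p = y" "path E q" "hd q = x" "last q = y"
  shows "p = q"
  using assms unfolding tree_def by blast

lemma tree_conn: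
  assumes "tree N E" "x \<in> N" "y \<in> N"
  shows "\<exists>p. path E p \<and> hd p = x \<and> last p = y"
  using assms unfolding tree_def by blast

lemma wk_set_graph: "graph N E \<Longrightarrow> wk E xs \<Longrightarrow> hd xs \<in> N \<Longrightarrow> set xs \<subseteq> N"
  using wk_set[of E xs N] graphD(3,4)[of N E] by blast

lemma tree_PL:
  assumes "tree N E" "path E xs" "hd xs \<in> N"
  shows "tdist E (hd xs) (last xs) = length xs - 1"
proof -
  have w: "wk E xs" "distinct xs" using assms(2) by (auto simp: path_wk)
  have le: "tdist E (hd xs) (last xs) \<le> length xs - 1" using tdist_le[OF w(1)] by simp
  obtain ws where ws: "wk E ws" "hd ws = hd xs" "last ws = last xs" "length ws = Suc (tdist E (hd xs) (last xs))"
    using tdist_ex[OF w(1)] by blast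
  obtain ps where ps: "wk E ps" "distinct ps" "hd ps = hd xs" "last ps = last xs" "length ps \<le> length ws"
    using shortcut[OF ws(1)] ws by auto
  have "last xs \<in> N" using wk_set_graph[OF tree_graph[OF assms(1)] w(1) assms(3)] w(1) using wk_ne[OF w(1)] by auto
  then have "ps = xs" using tree_unique[OF assms(1) assms(3) _ _ _ _ assms(2)] ps by (auto simp: path_wk)
  then show ?thesis using le ps ws by simp
qed

lemma path_rev: "graph N E \<Longrightarrow> path E xs \<Longrightarrow> path E (rev xs)"
  by (auto simp: path_wk intro: wk_rev dest: graphD)

lemma tdist_sym:
  assumes "tree N E" "x \<in> N" "y \<in> N"
  shows "tdist E x y = tdist E y x"
proof -
  obtain p where p: "path E p" "hd p = x" "last p = y" using tree_conn[OF assms] by blast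
  have g: "graph N E" using assms(1) by (rule tree_graph)
  have ne: "p \<noteq> []" using p by (auto simp: path_wk)
  have "path E (rev p)" using path_rev[OF g p(1)] .
  moreover have "hd (rev p) \<in> N" using ne p assms by (simp add: hd_rev)
  ultimately have "tdist E (hd (rev p)) (last (rev p)) = length (rev p) - 1"
    using tree_PL[OF assms(1)] by blast
  moreover have "tdist E x y = length p - 1" using tree_PL[OF assms(1) p(1)] p assms by simp
  ultimately show ?thesis using ne p by (simp add: hd_rev last_rev)
qed

lemma tdist_triangle:
  assumes "tree N E" "x \<in> N" "y \<in> N" "z \<in> N"
  shows "tdist E x z \<le> tdist E x y + tdist E y z"
proof -
  obtain p where p: "path E p" "hd p = x" "last p = y" using tree_conn[OF assms(1,2,3)] by blast
  obtain q where q: "path E q" "hd q = y" "last q = z" using tree_conn[OF assms(1,3,4)] by blast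
  obtain a where a: "wk E a" "hd a = x" "last a = y" "length a = Suc (tdist E x y)"
    using tdist_ex[of E p] p by (auto simp: path_wk)
  obtain b where b: "wk E b" "hd b = y" "last b = z" "length b = Suc (tdist E y z)"
    using tdist_ex[of E q] q by (auto simp: path_wk)
  have "wk E (a @ tl b)" using wk_glue[OF a(1) b(1)] a b by simp
  moreover have "hd (a @ tl b) = x" using a by (cases a) auto
  moreover have "last (a @ tl b) = z" using a b by (cases b; cases "tl b") (auto)
  ultimately have "tdist E x z \<le> length (a @ tl b) - 1" by (intro tdist_le) auto
  then show ?thesis using a b by simp
qed

lemma path_single: "path E xs \<Longrightarrow> hd xs = last xs \<Longrightarrow> xs = [hd xs]"
proof (rule ccontr)
  assume h: "path E xs" "hd xs = last xs" "xs \<noteq> [hd xs]"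
  then have ne: "xs \<noteq> []" by (auto simp: path_wk)
  then have "length xs \<ge> 2" using h(3) by (cases xs; cases "tl xs") auto
  moreover have "distinct xs" using h(1) by (simp add: path_wk)
  ultimately have "xs ! 0 \<noteq> xs ! (length xs - 1)"
  proof -
    assume a: "2 \<le> length xs" "distinct xs"
    have "0 < length xs" "length xs - 1 < length xs" "0 \<noteq> length xs - 1" using a by auto
    then show ?thesis using nth_eq_iff_index_eq[OF a(2), of 0 "length xs - 1"] by blast
  qed
  then show False using h(2) ne by (simp add: hd_conv_nth last_conv_nth)
qed

lemma path_internal:
  assumes "path E xs" "0 < i" "Suc i < length xs" "\<And>a b. E a b \<Longrightarrow> E b a"
  shows "E (xs ! i) (xs ! (i - 1))" "E (xs ! i) (xs ! Suc i)" "xs ! (i - 1) \<noteq> xs ! Suc i"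
proof -
  have w: "walk E xs" "distinct xs" using assms(1) by (auto simp: path_def)
  obtain j where j: "i = Suc j" using assms(2) by (cases i) auto
  have "E (xs ! j) (xs ! Suc j)" using w(1) assms(3) j unfolding walk_def by auto
  then show "E (xs ! i) (xs ! (i - 1))" using assms(4) j by simp
  show "E (xs ! i) (xs ! Suc i)" using w(1) assms(3) unfolding walk_def by auto
  show "xs ! (i - 1) \<noteq> xs ! Suc i" using w(2) assms(2,3) by (simp add: nth_eq_iff_index_eq)
qed

lemma two_le_card: "finite A \<Longrightarrow> a \<in> A \<Longrightarrow> b \<in> A \<Longrightarrow> a \<noteq> b \<Longrightarrow> 2 \<le> card A"
  using card_mono[of A "{a, b}"] by auto

lemma path_avoid:
  assumes "graph N E" "path E xs" "card {y \<in> N. E l y} \<le> 1" "hd xs \<noteq> l" "last xs \<noteq> l"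
  shows "l \<notin> set xs"
proof
  assume "l \<in> set xs"
  then obtain i where i: "i < length xs" "xs ! i = l" by (auto simp: in_set_conv_nth)
  have ne: "xs \<noteq> []" using i by auto
  have "i \<noteq> 0"
  proof
    assume "i = 0" then have "hd xs = l" using i ne by (simp add: hd_conv_nth)
    then show False using assms(4) by simp
  qed
  moreover have "i \<noteq> length xs - 1" using i assms(5) ne by (auto simp: last_conv_nth)
  ultimately have ii: "0 < i" "Suc i < length xs" using i by auto
  note pi = path_internal[OF assms(2) ii graphD(5)[OF assms(1)]]
  have "2 \<le> card {y \<in> N. E l y}"
    using pi i graphD[OF assms(1)] by (intro two_le_card[of _ "xs ! (i - 1)" "xs ! Suc i"]) auto
  then show False using assms(3) by simp
qed



definition restr :: "('b \<Rightarrow> 'b \<Rightarrow> bool) \<Rightarrow> 'b set \<Rightarrow> 'b \<Rightarrow> 'b \<Rightarrow> bool" where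
  "restr E A a b = (E a b \<and> a \<in> A \<and> b \<in> A)"

definition ren :: "('b \<Rightarrow> 'c) \<Rightarrow> 'b set \<Rightarrow> ('b \<Rightarrow> 'b \<Rightarrow> bool) \<Rightarrow> 'c \<Rightarrow> 'c \<Rightarrow> bool" where
  "ren f N E a b = (\<exists>x\<in>N. \<exists>y\<in>N. a = f x \<and> b = f y \<and> E x y)"

lemma tree_intro:
  assumes "graph N E"
    "\<And>x y. x \<in> N \<Longrightarrow> y \<in> N \<Longrightarrow> \<exists>p. path E p \<and> hd p = x \<and> last p = y"
    "\<And>x y p q. x \<in> N \<Longrightarrow> y \<in> N \<Longrightarrow> path E p \<Longrightarrow> hd p = x \<Longrightarrow> last p = y \<Longrightarrow>
       path E q \<Longrightarrow> hd q = x \<Longrightarrow> last q = y \<Longrightarrow> p = q"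
  shows "tree N E"
  unfolding tree_def using assms by metis

lemma path_ne: "path E p \<Longrightarrow> p \<noteq> []" by (auto simp: path_wk)

lemma tree_restr_self: "tree N E \<Longrightarrow> restr E N = E"
  by (auto simp: restr_def fun_eq_iff dest: tree_graph graphD)

lemma restr_restr: "B \<subseteq> A \<Longrightarrow> restr (restr E A) B = restr E B"
  by (auto simp: restr_def fun_eq_iff)

lemma tree_remove_leaf:
  assumes T: "tree N E" and l: "l \<in> N" "card {y \<in> N. E l y} \<le> 1" and c: "2 \<le> card N"
  shows "tree (N - {l}) (restr E (N - {l}))"
    "\<forall>x\<in>N - {l}. \<forall>y\<in>N - {l}. tdist (restr E (N - {l})) x y = tdist E x y"
proof -
  have g: "graph N E" using T by (rule tree_graph)
  let ?E = "restr E (N - {l})"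
  have fin: "finite N" using g by (rule graphD)
  have "N - {l} \<noteq> {}"
  proof
    assume "N - {l} = {}"
    then have "N \<subseteq> {l}" by auto
    then have "card N \<le> 1" using card_mono[of "{l}" N] by simp
    then show False using c by simp
  qed
  then have g': "graph (N - {l}) ?E" using g unfolding graph_def restr_def by auto
  have P1: "path ?E p" if "path E p" "hd p \<in> N - {l}" "last p \<in> N - {l}" for p
  proof -
    have "l \<notin> set p" using path_avoid[OF g that(1) l(2)] that by auto
    moreover have "set p \<subseteq> N" using wk_set_graph[OF g] that by (auto simp: path_wk)
    ultimately show ?thesis using that(1) unfolding path_wk
      by (auto intro!: wk_mono[where E=E] simp: restr_def)
  qed
  have P2: "path E p" if "path ?E p" for p
    using that unfolding path_wk by (auto intro!: wk_mono[where E="?E"] simp: restr_def)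
  show T': "tree (N - {l}) ?E"
  proof (rule tree_intro[OF g'])
    fix x y assume xy: "x \<in> N - {l}" "y \<in> N - {l}"
    then obtain p where "path E p" "hd p = x" "last p = y" using tree_conn[OF T] by blast
    then show "\<exists>p. path ?E p \<and> hd p = x \<and> last p = y" using P1 xy by blast
  next
    fix x y p q assume "x \<in> N - {l}" "y \<in> N - {l}" "path ?E p" "hd p = x" "last p = y"
      "path ?E q" "hd q = x" "last q = y"
    then show "p = q" using tree_unique[OF T] P2 by blast
  qed
  show "\<forall>x\<in>N - {l}. \<forall>y\<in>N - {l}. tdist ?E x y = tdist E x y"
  proof (intro ballI)
    fix x y assume xy: "x \<in> N - {l}" "y \<in> N - {l}"
    then obtain p where p: "path E p" "hd p = x" "last p = y" using tree_conn[OF T] by blast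
    have "tdist E x y = length p - 1" using tree_PL[OF T p(1)] p xy by auto
    moreover have "tdist ?E x y = length p - 1" using tree_PL[OF T' P1[OF p(1)]] p xy by auto
    ultimately show "tdist ?E x y = tdist E x y" by simp
  qed
qed

lemma tree_add_leaf:
  assumes T: "tree N E" and x: "x \<in> N" and y: "y \<notin> N"
  shows "tree (insert y N) (\<lambda>a b. E a b \<or> (a = y \<and> b = x) \<or> (a = x \<and> b = y))"
proof -
  define E' where "E' = (\<lambda>a b. E a b \<or> (a = y \<and> b = x) \<or> (a = x \<and> b = y))"
  have g: "graph N E" using T by (rule tree_graph)
  have xy: "x \<noteq> y" using x y by auto
  have g': "graph (insert y N) E'" using g x xy unfolding graph_def E'_def by auto
  have nb: "{z \<in> insert y N. E' y z} = {x}" using g x y xy unfolding E'_def by (auto dest: graphD)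
  have A: "path E q" if "path E' q" "hd q \<in> N" "last q \<in> N" for q
  proof -
    have c1: "card {z \<in> insert y N. E' y z} \<le> 1" using nb by simp
    have "y \<notin> set q" using path_avoid[OF g' that(1) c1] that y by auto
    moreover have "set q \<subseteq> insert y N" using wk_set_graph[OF g'] that by (auto simp: path_wk)
    ultimately show ?thesis using that(1) unfolding path_wk E'_def
      by (auto intro: wk_mono)
  qed
  have B: "\<exists>q'. q = y # q' \<and> path E q' \<and> hd q' = x \<and> last q' = b"
    if hq: "path E' q" "hd q = y" "last q = b" "b \<in> N" for q b
  proof -
    obtain q' where q: "q = y # q'" using hq(1,2) path_ne[OF hq(1)] by (cases q) auto
    have "q' \<noteq> []" using q hq y by auto
    then have e: "E' y (hd q')" "path E' q'" "y \<notin> set q'" using hq(1) q by (auto simp: path_wk wk_Cons)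
    have "hd q' = x" using e(1) g y xy unfolding E'_def by (auto dest: graphD)
    moreover have "last q' = b" using hq q \<open>q' \<noteq> []\<close> by simp
    ultimately have "path E q'" using A[OF e(2)] x hq(4) by simp
    then show ?thesis using q \<open>hd q' = x\<close> \<open>last q' = b\<close> by blast
  qed
  have R: "path E' (rev q)" if "path E' q" for q using path_rev[OF g' that] .
  have M: "path E' p" if "path E p" for p using that unfolding path_wk E'_def by (auto intro: wk_mono)
  show ?thesis unfolding E'_def[symmetric]
  proof (rule tree_intro[OF g'])
    fix a b assume ab: "a \<in> insert y N" "b \<in> insert y N"
    have C: "\<exists>p. path E' p \<and> hd p = y \<and> last p = b" if hb: "b \<in> N" for b
    proof -
      obtain p where p: "path E p" "hd p = x" "last p = b" using tree_conn[OF T x hb] by blast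
      have "set p \<subseteq> N" using wk_set_graph[OF g] p x by (auto simp: path_wk)
      then have "path E' (y # p)" using M[OF p(1)] p y path_ne[OF p(1)]
        unfolding path_wk E'_def by (auto simp: wk_Cons)
      then show ?thesis using p path_ne[OF p(1)] by (intro exI[of _ "y # p"]) auto
    qed
    show "\<exists>p. path E' p \<and> hd p = a \<and> last p = b"
    proof (cases "a = y")
      case True
      show ?thesis
      proof (cases "b = y")
        case True then show ?thesis using \<open>a = y\<close> by (intro exI[of _ "[y]"]) (auto simp: path_wk)
      next
        case False then show ?thesis using C ab True by auto
      qed
    next
      case False
      then have a: "a \<in> N" using ab by auto
      show ?thesis
      proof (cases "b = y")
        case True
        obtain p where p: "path E' p" "hd p = y" "last p = a" using C a by blast
        then show ?thesis using R[OF p(1)] True path_ne[OF p(1)] by (intro exI[of _ "rev p"]) (auto simp: hd_rev last_rev)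
      next
        case False
        then obtain p where "path E p" "hd p = a" "last p = b" using tree_conn[OF T a] ab by auto
        then show ?thesis using M by blast
      qed
    qed
  next
    fix a b p q assume ab: "a \<in> insert y N" "b \<in> insert y N" and pq: "path E' p" "hd p = a" "last p = b"
      "path E' q" "hd q = a" "last q = b"
    have D: "p = q" if hd: "path E' p" "hd p = y" "last p = b" "path E' q" "hd q = y" "last q = b" "b \<in> N"
      for p q b
    proof -
      obtain p' where p': "p = y # p'" "path E p'" "hd p' = x" "last p' = b" using B hd by blast
      obtain q' where q': "q = y # q'" "path E q'" "hd q' = x" "last q' = b" using B hd by blast
      show ?thesis using p' q' tree_unique[OF T x \<open>b \<in> N\<close>] by metis
    qed
    show "p = q"
    proof (cases "a = y")
      case True
      show ?thesis
      proof (cases "b = y")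
        case True then show ?thesis using \<open>a = y\<close> pq path_single by metis
      next
        case False then show ?thesis using D pq ab True by auto
      qed
    next
      case False
      then have a: "a \<in> N" using ab by auto
      show ?thesis
      proof (cases "b = y")
        case True
        have "rev p = rev q" using D[OF R[OF pq(1)] _ _ R[OF pq(4)]] pq path_ne[OF pq(1)] path_ne[OF pq(4)] a True
          by (simp add: hd_rev last_rev)
        then show ?thesis by simp
      next
        case False
        then have b: "b \<in> N" using ab by auto
        show ?thesis using A pq a b tree_unique[OF T a b] by metis
      qed
    qed
  qed
qed




lemma tree_extend:
  assumes T: "tree N E" and fin: "finite X"
  shows "X \<inter> N = {} \<Longrightarrow> (\<forall>z\<in>X. par z \<in> N \<union> X \<and> (par z \<in> X \<longrightarrow> (rk (par z) :: nat) < rk z)) \<Longrightarrow>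
    tree (N \<union> X) (\<lambda>a b. E a b \<or> (a \<in> X \<and> b = par a) \<or> (b \<in> X \<and> a = par b))"
  using fin
proof (induction X rule: finite_ranking_induct[where f = rk])
  case empty then show ?case using T by simp
next
  case (insert x S)
  show ?case
  proof (cases "x \<in> S")
    case True then have "insert x S = S" by blast
    then show ?thesis using insert.IH insert.prems by simp
  next
    case False
    have cS: "\<forall>z\<in>S. par z \<in> N \<union> S \<and> (par z \<in> S \<longrightarrow> rk (par z) < rk z)"
    proof
      fix z assume z: "z \<in> S"
      have "par z \<noteq> x"
      proof
        assume "par z = x"
        then have "rk x < rk z" using insert.prems(2) z by blast
        then show False using insert.hyps(2)[OF z] by simp
      qed
      then show "par z \<in> N \<union> S \<and> (par z \<in> S \<longrightarrow> rk (par z) < rk z)" using insert.prems(2) z by blast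
    qed
    have SN: "S \<inter> N = {}" using insert.prems(1) by blast
    have TS: "tree (N \<union> S) (\<lambda>a b. E a b \<or> (a \<in> S \<and> b = par a) \<or> (b \<in> S \<and> a = par b))"
      using insert.IH[OF SN cS] .
    have px0: "par x \<in> N \<union> insert x S" "par x \<in> insert x S \<longrightarrow> rk (par x) < rk x" using insert.prems(2) by blast+
    have "par x \<noteq> x" using px0(2) by auto
    then have px: "par x \<in> N \<union> S" using px0(1) by blast
    have xn: "x \<notin> N \<union> S" using insert.prems(1) False by blast
    have A: "tree (insert x (N \<union> S)) (\<lambda>a b. (E a b \<or> (a \<in> S \<and> b = par a) \<or> (b \<in> S \<and> a = par b))
       \<or> (a = x \<and> b = par x) \<or> (a = par x \<and> b = x))"
      by (rule tree_add_leaf[OF TS px xn])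
    have B: "insert x (N \<union> S) = N \<union> insert x S" by auto
    have C: "(\<lambda>a b. (E a b \<or> (a \<in> S \<and> b = par a) \<or> (b \<in> S \<and> a = par b))
       \<or> (a = x \<and> b = par x) \<or> (a = par x \<and> b = x)) =
       (\<lambda>a b. E a b \<or> (a \<in> insert x S \<and> b = par a) \<or> (b \<in> insert x S \<and> a = par b))"
      by (intro ext) blast
    show ?thesis using A unfolding B C .
  qed
qed

lemma tree_ren:
  assumes T: "tree N E" and inj: "inj_on f N"
  shows "tree (f ` N) (ren f N E)"
    "\<forall>x\<in>N. \<forall>y\<in>N. tdist (ren f N E) (f x) (f y) = tdist E x y"
    "\<forall>x\<in>N. card {b \<in> f ` N. ren f N E (f x) b} = card {y \<in> N. E x y}"
proof -
  have g: "graph N E" using T by (rule tree_graph)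
  have re: "ren f N E (f x) (f y) = E x y" if "x \<in> N" "y \<in> N" for x y
    using that inj unfolding ren_def by (auto dest: inj_onD)
  have g': "graph (f ` N) (ren f N E)"
    unfolding graph_def
  proof (intro conjI allI impI)
    show "finite (f ` N)" "f ` N \<noteq> {}" using graphD(1,2)[OF g] by auto
  next
    fix u v assume "ren f N E u v"
    then obtain x y where xy: "x \<in> N" "y \<in> N" "u = f x" "v = f y" "E x y" unfolding ren_def by blast
    then show "u \<in> f ` N" "v \<in> f ` N" by auto
    have "E y x" using graphD(5)[OF g xy(5)] .
    then show "ren f N E v u" using xy unfolding ren_def by blast
  next
    fix u show "\<not> ren f N E u u" using graphD(6)[OF g] inj_onD[OF inj] unfolding ren_def by metis
  qed
  have M: "path (ren f N E) (map f p)" if hp: "path E p" "set p \<subseteq> N" for p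
  proof -
    have "wk (ren f N E) (map f p)"
    proof (rule wk_map[of E p])
      show "wk E p" using hp by (simp add: path_wk)
    next
      fix a b assume "a \<in> set p" "b \<in> set p" "E a b"
      then show "ren f N E (f a) (f b)" using hp(2) unfolding ren_def by blast
    qed
    moreover have "distinct (map f p)" using hp inj_on_subset[OF inj hp(2)]
      by (simp add: path_wk distinct_map)
    ultimately show ?thesis by (simp add: path_wk)
  qed
  let ?g = "inv_into N f"
  have ge: "E (?g a) (?g b)" if hr: "ren f N E a b" for a b
  proof -
    obtain x y where xy: "x \<in> N" "y \<in> N" "a = f x" "b = f y" "E x y" using hr unfolding ren_def by blast
    have "?g a = x" "?g b = y" using xy inv_into_f_f[OF inj] by auto
    then show ?thesis using xy by simp
  qed
  have B: "map f (map ?g q) = q \<and> path E (map ?g q) \<and> set (map ?g q) \<subseteq> N"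
    if hq: "path (ren f N E) q" "hd q \<in> f ` N" for q
  proof -
    have s: "set q \<subseteq> f ` N" using wk_set_graph[OF g'] hq by (auto simp: path_wk)
    have "map (f \<circ> ?g) q = q"
    proof (rule map_idI)
      fix z assume "z \<in> set q" then have "z \<in> f ` N" using s by blast
      then show "(f \<circ> ?g) z = z" by (simp add: f_inv_into_f)
    qed
    then have "map f (map ?g q) = q" by simp
    moreover have "set (map ?g q) \<subseteq> N" using s by (auto intro: inv_into_into)
    moreover have "wk E (map ?g q)"
      by (rule wk_map[of "ren f N E"]) (use hq in \<open>simp add: path_wk\<close>, rule ge)
    moreover have "distinct (map ?g q)"
    proof -
      have "inj_on ?g (set q)" using s by (rule inj_on_inv_into)
      then show ?thesis using hq by (simp add: path_wk distinct_map)
    qed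
    ultimately show ?thesis unfolding path_wk by simp
  qed
  show T': "tree (f ` N) (ren f N E)"
  proof (rule tree_intro[OF g'])
    fix a b assume "a \<in> f ` N" "b \<in> f ` N"
    then obtain x y where xy: "x \<in> N" "y \<in> N" "a = f x" "b = f y" by auto
    then obtain p where p: "path E p" "hd p = x" "last p = y" using tree_conn[OF T] by blast
    have "set p \<subseteq> N" using wk_set_graph[OF g] p xy by (auto simp: path_wk)
    then show "\<exists>p. path (ren f N E) p \<and> hd p = a \<and> last p = b"
      using M[OF p(1)] p xy path_ne[OF p(1)] by (intro exI[of _ "map f p"]) (auto simp: hd_map last_map)
  next
    fix a b p q assume ab: "a \<in> f ` N" "b \<in> f ` N" "path (ren f N E) p" "hd p = a" "last p = b"
      "path (ren f N E) q" "hd q = a" "last q = b"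
    have Bp: "map f (map ?g p) = p" "path E (map ?g p)" using B[OF ab(3)] ab(1,4) by auto
    have Bq: "map f (map ?g q) = q" "path E (map ?g q)" using B[OF ab(6)] ab(1,7) by auto
    have np: "p \<noteq> []" "q \<noteq> []" using ab path_ne by auto
    have ga: "?g a \<in> N" "?g b \<in> N" using ab(1,2) by (auto intro: inv_into_into)
    have "hd (map ?g p) = ?g a" "last (map ?g p) = ?g b" "hd (map ?g q) = ?g a" "last (map ?g q) = ?g b"
      using np ab by (simp_all add: hd_map last_map)
    then have "map ?g p = map ?g q"
      using tree_unique[OF T ga] Bp Bq by blast
    then have "map f (map ?g p) = map f (map ?g q)" by simp
    then show "p = q" using Bp(1) Bq(1) by simp
  qed
  show "\<forall>x\<in>N. \<forall>y\<in>N. tdist (ren f N E) (f x) (f y) = tdist E x y"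
  proof (intro ballI)
    fix x y assume xy: "x \<in> N" "y \<in> N"
    then obtain p where p: "path E p" "hd p = x" "last p = y" using tree_conn[OF T] by blast
    have s: "set p \<subseteq> N" using wk_set_graph[OF g] p xy by (auto simp: path_wk)
    have "tdist E x y = length p - 1" using tree_PL[OF T p(1)] p xy by auto
    moreover have "tdist (ren f N E) (f x) (f y) = length (map f p) - 1"
      using tree_PL[OF T' M[OF p(1) s]] p xy path_ne[OF p(1)] by (auto simp: hd_map last_map)
    ultimately show "tdist (ren f N E) (f x) (f y) = tdist E x y" by simp
  qed
  show "\<forall>x\<in>N. card {b \<in> f ` N. ren f N E (f x) b} = card {y \<in> N. E x y}"
  proof
    fix x assume x: "x \<in> N"
    have "{b \<in> f ` N. ren f N E (f x) b} = f ` {y \<in> N. E x y}"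
    proof (intro equalityI subsetI)
      fix b assume "b \<in> {b \<in> f ` N. ren f N E (f x) b}"
      then obtain y where "y \<in> N" "b = f y" "ren f N E (f x) (f y)" by blast
      then show "b \<in> f ` {y \<in> N. E x y}" using re[OF x] by blast
    next
      fix b assume "b \<in> f ` {y \<in> N. E x y}"
      then obtain y where "y \<in> N" "b = f y" "E x y" by blast
      then show "b \<in> {b \<in> f ` N. ren f N E (f x) b}" using re[OF x] by blast
    qed
    then show "card {b \<in> f ` N. ren f N E (f x) b} = card {y \<in> N. E x y}"
      by (simp add: card_image inj_on_subset[OF inj])
  qed
qed

lemma tree_nb:
  assumes T: "tree N E" "2 \<le> card N" "x \<in> N"
  shows "\<exists>y. E x y"
proof -
  have "\<exists>z\<in>N. z \<noteq> x"
  proof (rule ccontr)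
    assume "\<not> ?thesis"
    then have "N \<subseteq> {x}" by auto
    then have "card N \<le> 1" using card_mono[of "{x}" N] by simp
    then show False using T by simp
  qed
  then obtain z where z: "z \<in> N" "z \<noteq> x" by blast
  obtain p where p: "path E p" "hd p = x" "last p = z" using tree_conn[OF T(1) T(3) z(1)] by blast
  obtain a p1 where p1: "p = a # p1" using path_ne[OF p(1)] by (cases p) auto
  have "p1 \<noteq> []" using p1 p z by auto
  then obtain w p' where "p1 = w # p'" by (cases p1) auto
  then have "wk E (x # w # p')" using p(1,2) p1 by (simp add: path_wk)
  then show ?thesis by auto
qed



lemma ball_meet:
  assumes T: "tree N E" and ab: "a \<in> N" "b \<in> N"
  shows "({t \<in> N. tdist E a t \<le> r1} \<inter> {t \<in> N. tdist E b t \<le> r2} \<noteq> {}) = (tdist E a b \<le> r1 + r2)"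
proof
  assume "{t \<in> N. tdist E a t \<le> r1} \<inter> {t \<in> N. tdist E b t \<le> r2} \<noteq> {}"
  then obtain t where t: "t \<in> N" "tdist E a t \<le> r1" "tdist E b t \<le> r2" by blast
  have "tdist E a b \<le> tdist E a t + tdist E t b" using tdist_triangle[OF T ab(1) t(1) ab(2)] .
  moreover have "tdist E t b = tdist E b t" using tdist_sym[OF T t(1) ab(2)] .
  ultimately show "tdist E a b \<le> r1 + r2" using t by linarith
next
  assume d: "tdist E a b \<le> r1 + r2"
  have g: "graph N E" using T by (rule tree_graph)
  obtain p where p: "path E p" "hd p = a" "last p = b" using tree_conn[OF T ab] by blast
  obtain ws where ws: "wk E ws" "hd ws = a" "last ws = b" "length ws = Suc (tdist E a b)"
    using tdist_ex[of E p] p by (auto simp: path_wk)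
  define D where "D = tdist E a b"
  define i where "i = min r1 D"
  have iD: "i \<le> D" "i \<le> r1" "D - i \<le> r2" using d unfolding i_def D_def by auto
  have il: "i < length ws" using ws iD unfolding D_def by simp
  have sN: "set ws \<subseteq> N" using wk_set_graph[OF g ws(1)] ws ab by simp
  define t where "t = ws ! i"
  have tN: "t \<in> N" using sN il unfolding t_def by (auto simp: subset_iff)
  have w1: "wk E (take (Suc i) ws)" using wk_take[OF ws(1)] by simp
  have "hd (take (Suc i) ws) = a" using ws il by (cases ws) auto
  moreover have "last (take (Suc i) ws) = t" using il unfolding t_def by (subst last_conv_nth) (auto simp: min_def intro: arg_cong[where f="(!) ws"])
  ultimately have "tdist E a t \<le> length (take (Suc i) ws) - 1" using tdist_le[OF w1] by blast
  then have at: "tdist E a t \<le> r1" using il iD by simp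
  have w2: "wk E (drop i ws)" using wk_drop[OF ws(1) il] .
  have "hd (drop i ws) = t" using il unfolding t_def by (simp add: hd_drop_conv_nth)
  moreover have "last (drop i ws) = b" using il ws by simp
  ultimately have "tdist E t b \<le> length (drop i ws) - 1" using tdist_le[OF w2] by blast
  then have "tdist E t b \<le> D - i" using ws unfolding D_def by simp
  then have bt: "tdist E b t \<le> r2" using tdist_sym[OF T tN ab(2)] iD by simp
  show "{t \<in> N. tdist E a t \<le> r1} \<inter> {t \<in> N. tdist E b t \<le> r2} \<noteq> {}" using at bt tN by blast
qed

lemma prune:
  "tree N E \<Longrightarrow> C \<subseteq> N \<Longrightarrow> \<exists>N0. C \<subseteq> N0 \<and> N0 \<subseteq> N \<and> tree N0 (restr E N0) \<and>
     (\<forall>x\<in>N0. \<forall>y\<in>N0. tdist (restr E N0) x y = tdist E x y) \<and>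
     (2 \<le> card N0 \<longrightarrow> (\<forall>x\<in>N0. card {y \<in> N0. restr E N0 x y} \<le> 1 \<longrightarrow> x \<in> C))"
proof (induction "card N" arbitrary: N E rule: less_induct)
  case less
  have T: "tree N E" by fact
  have C: "C \<subseteq> N" by fact
  show ?case
  proof (cases "2 \<le> card N \<and> (\<exists>l\<in>N. card {y \<in> N. E l y} \<le> 1 \<and> l \<notin> C)")
    case True
    then obtain l where l: "l \<in> N" "card {y \<in> N. E l y} \<le> 1" "l \<notin> C" and c2: "2 \<le> card N" by blast
    note R = tree_remove_leaf[OF T l(1,2) c2]
    have fin: "finite N" using graphD(1)[OF tree_graph[OF T]] .
    have lt: "card (N - {l}) < card N" using fin l(1) c2 by simp
    obtain N0 where N0: "C \<subseteq> N0" "N0 \<subseteq> N - {l}" "tree N0 (restr (restr E (N - {l})) N0)"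
      "\<forall>x\<in>N0. \<forall>y\<in>N0. tdist (restr (restr E (N - {l})) N0) x y = tdist (restr E (N - {l})) x y"
      "2 \<le> card N0 \<longrightarrow> (\<forall>x\<in>N0. card {y \<in> N0. restr (restr E (N - {l})) N0 x y} \<le> 1 \<longrightarrow> x \<in> C)"
      using less.hyps[OF lt R(1)] C l(3) by blast
    have rr: "restr (restr E (N - {l})) N0 = restr E N0" using N0(2) by (rule restr_restr)
    show ?thesis
    proof (intro exI[of _ N0] conjI)
      show "C \<subseteq> N0" "N0 \<subseteq> N" using N0 by auto
      show "tree N0 (restr E N0)" using N0(3) rr by simp
      show "\<forall>x\<in>N0. \<forall>y\<in>N0. tdist (restr E N0) x y = tdist E x y"
        using N0(2,4) R(2) rr by (metis subsetD)
      show "2 \<le> card N0 \<longrightarrow> (\<forall>x\<in>N0. card {y \<in> N0. restr E N0 x y} \<le> 1 \<longrightarrow> x \<in> C)"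
        using N0(5) rr by simp
    qed
  next
    case False
    have rr: "restr E N = E" using T by (rule tree_restr_self)
    show ?thesis
    proof (intro exI[of _ N] conjI)
      show "C \<subseteq> N" "N \<subseteq> N" using C by auto
      show "tree N (restr E N)" using T rr by simp
      show "\<forall>x\<in>N. \<forall>y\<in>N. tdist (restr E N) x y = tdist E x y" using rr by simp
      show "2 \<le> card N \<longrightarrow> (\<forall>x\<in>N. card {y \<in> N. restr E N x y} \<le> 1 \<longrightarrow> x \<in> C)"
        using False rr by auto
    qed
  qed
qed



lemma card2_obtain: "finite A \<Longrightarrow> 2 \<le> card A \<Longrightarrow> \<exists>a\<in>A. \<exists>b\<in>A. a \<noteq> b"
  using card_le_Suc0_iff_eq[of A] by auto

lemma construct:
  fixes V :: "'a set" and N0 :: "'b set" and E0 and c :: "'a \<Rightarrow> 'b" and p :: "'a \<Rightarrow> nat"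
  assumes T0: "tree N0 E0" and finV: "finite V" and cV: "2 \<le> card V"
    and cN: "\<forall>v\<in>V. c v \<in> N0" and p1: "\<forall>v\<in>V. 1 \<le> p v"
    and lv: "2 \<le> card N0 \<longrightarrow> (\<forall>x\<in>N0. card {y \<in> N0. E0 x y} \<le> 1 \<longrightarrow> x \<in> c ` V)"
  shows "\<exists>(NF::nat set) EF \<tau>. tree NF EF \<and> bij_betw \<tau> V (leaves NF EF) \<and>
     (\<forall>u\<in>V. \<forall>v\<in>V. u \<noteq> v \<longrightarrow> tdist EF (\<tau> u) (\<tau> v) = p u + p v + tdist E0 (c u) (c v))"
proof -
  define N1 :: "('b + 'a \<times> nat) set" where "N1 = Inl ` N0"
  define E1 where "E1 = ren (Inl :: 'b \<Rightarrow> 'b + 'a \<times> nat) N0 E0"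
  have injl: "inj_on (Inl :: 'b \<Rightarrow> 'b + 'a \<times> nat) N0" by (simp add: inj_on_def)
  note R1 = tree_ren[OF T0 injl, folded N1_def E1_def]
  have T1: "tree N1 E1" using R1(1) .
  have g1: "graph N1 E1" using tree_graph[OF T1] .
  have g0: "graph N0 E0" using tree_graph[OF T0] .
  have E1_iff: "E1 (Inl s) (Inl t) = E0 s t" if "s \<in> N0" "t \<in> N0" for s t
    using that unfolding E1_def ren_def by blast
  have E1_N: "a \<in> N1 \<and> b \<in> N1" if "E1 a b" for a b using graphD(3,4)[OF g1 that] by blast
  define X :: "('b + 'a \<times> nat) set" where "X = (\<Union>v\<in>V. (\<lambda>i. Inr (v, i)) ` {1..p v})"
  have X_iff: "z \<in> X \<longleftrightarrow> (\<exists>w j. z = Inr (w, j) \<and> w \<in> V \<and> 1 \<le> j \<and> j \<le> p w)" for z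
    unfolding X_def by (auto simp: image_iff)
  have XI: "Inr (w, j) \<in> X \<longleftrightarrow> w \<in> V \<and> 1 \<le> j \<and> j \<le> p w" for w j
    unfolding X_iff by auto
  have finX: "finite X" unfolding X_def using finV by auto
  define par :: "'b + 'a \<times> nat \<Rightarrow> 'b + 'a \<times> nat" where "par z = (case z of Inl t \<Rightarrow> z | Inr (v, i) \<Rightarrow> if i \<le> 1 then Inl (c v) else Inr (v, i - 1))" for z
  define rk :: "('b + 'a \<times> nat) \<Rightarrow> nat" where "rk z = (case z of Inl t \<Rightarrow> 0 | Inr (v, i) \<Rightarrow> i)" for z
  have par1: "par (Inr (v, i)) = (if i \<le> 1 then Inl (c v) else Inr (v, i - 1))" for v i
    unfolding par_def by simp
  have rk1: "rk (Inr (v, i)) = i" for v i unfolding rk_def by simp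
  have XN: "X \<inter> N1 = {}" unfolding N1_def by (auto simp: X_iff)
  have parX: "\<forall>z\<in>X. par z \<in> N1 \<union> X \<and> (par z \<in> X \<longrightarrow> rk (par z) < rk z)"
  proof
    fix z assume "z \<in> X"
    then obtain w j where z: "z = Inr (w, j)" "w \<in> V" "1 \<le> j" "j \<le> p w" unfolding X_iff by blast
    show "par z \<in> N1 \<union> X \<and> (par z \<in> X \<longrightarrow> rk (par z) < rk z)"
    proof (cases "j \<le> 1")
      case True
      then have "par z = Inl (c w)" using z par1 by simp
      then show ?thesis using cN z(2) XN unfolding N1_def by auto
    next
      case False
      then have "par z = Inr (w, j - 1)" using z par1 by simp
      then show ?thesis using z False XI rk1 by auto
    qed
  qed
  define NF' where "NF' = N1 \<union> X"
  define EF' where "EF' = (\<lambda>a b. E1 a b \<or> (a \<in> X \<and> b = par a) \<or> (b \<in> X \<and> a = par b))"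
  have TF: "tree NF' EF'" unfolding NF'_def EF'_def using tree_extend[OF T1 finX XN parX] .
  have gF: "graph NF' EF'" using tree_graph[OF TF] .
  have finF: "finite NF'" using graphD(1)[OF gF] .
  have parN: "par z \<in> NF'" if "z \<in> X" for z using parX that unfolding NF'_def by blast
  define \<tau>0 where "\<tau>0 v = (Inr (v, p v) :: 'b + 'a \<times> nat)" for v
  have \<tau>X: "\<tau>0 v \<in> X" if "v \<in> V" for v using that p1 XI unfolding \<tau>0_def by auto
  have notleaf: "z \<notin> leaves NF' EF'" if "a \<in> NF'" "b \<in> NF'" "a \<noteq> b" "EF' z a" "EF' z b" for z a b
  proof -
    have "2 \<le> card {y \<in> NF'. EF' z y}"
      using that finF by (intro two_le_card[of _ a b]) auto
    then show ?thesis unfolding leaves_def by auto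
  qed
  have leavesF: "leaves NF' EF' = \<tau>0 ` V"
  proof (intro equalityI subsetI)
    fix z assume zl: "z \<in> leaves NF' EF'"
    then have zN: "z \<in> NF'" unfolding leaves_def by blast
    show "z \<in> \<tau>0 ` V"
    proof (cases "z \<in> X")
      case True
      then obtain w j where z: "z = Inr (w, j)" "w \<in> V" "1 \<le> j" "j \<le> p w" unfolding X_iff by blast
      show ?thesis
      proof (cases "j = p w")
        case True then show ?thesis using z unfolding \<tau>0_def by auto
      next
        case False
        let ?a = "par z" and ?b = "Inr (w, Suc j) :: 'b + 'a \<times> nat"
        have bX: "?b \<in> X" using XI z False by auto
        have pb: "par ?b = z" using par1 z by simp
        have "?a \<noteq> ?b"
        proof (cases "j \<le> 1")
          case True then show ?thesis using par1 z by simp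
        next
          case False then show ?thesis using par1 z by simp
        qed
        moreover have "?a \<in> NF'" using parN \<open>z \<in> X\<close> by blast
        moreover have "?b \<in> NF'" using bX unfolding NF'_def by blast
        moreover have "EF' z ?a" using \<open>z \<in> X\<close> unfolding EF'_def by blast
        moreover have "EF' z ?b" using bX pb unfolding EF'_def by blast
        ultimately show ?thesis using notleaf zl by blast
      qed
    next
      case False
      then have "z \<in> N1" using zN unfolding NF'_def by blast
      then obtain t where t: "z = Inl t" "t \<in> N0" unfolding N1_def by blast
      have zpar: "par (Inr (v, 1)) = z \<and> Inr (v, 1) \<in> X \<and> Inr (v, 1) \<in> NF'" if "v \<in> V" "c v = t" for v
        using that par1 t XI p1 unfolding NF'_def by auto
      show ?thesis
      proof (cases "2 \<le> card N0")
        case True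
        obtain s where s: "E0 t s" using tree_nb[OF T0 True t(2)] by blast
        have sN: "s \<in> N0" using graphD(4)[OF g0 s] .
        show ?thesis
        proof (cases "card {y \<in> N0. E0 t y} \<le> 1")
          case True
          then obtain v where v: "v \<in> V" "c v = t" using lv \<open>2 \<le> card N0\<close> t by blast
          let ?a = "Inl s :: 'b + 'a \<times> nat" and ?b = "Inr (v, 1) :: 'b + 'a \<times> nat"
          have "?a \<in> NF'" using sN unfolding NF'_def N1_def by blast
          moreover have "EF' z ?a" using E1_iff[OF t(2) sN] s t unfolding EF'_def by simp
          moreover have "EF' z ?b" using zpar[OF v] unfolding EF'_def by blast
          ultimately show ?thesis using notleaf zl zpar[OF v] by blast
        next
          case False
          have "2 \<le> card {y \<in> N0. E0 t y}" using False by simp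
          then obtain s1 s2 where s12: "s1 \<in> N0" "s2 \<in> N0" "E0 t s1" "E0 t s2" "s1 \<noteq> s2"
            using card2_obtain[of "{y \<in> N0. E0 t y}"] graphD(1)[OF g0] by auto
          have "EF' z (Inl s1)" "EF' z (Inl s2)" using E1_iff s12 t unfolding EF'_def by auto
          moreover have "Inl s1 \<in> NF'" "Inl s2 \<in> NF'" using s12 unfolding NF'_def N1_def by auto
          ultimately show ?thesis using notleaf zl s12(5) by blast
        qed
      next
        case False
        obtain u v where uv: "u \<in> V" "v \<in> V" "u \<noteq> v" using card2_obtain[OF finV cV] by blast
        have "card N0 \<le> Suc 0" using False by simp
        then have all: "\<forall>a\<in>N0. \<forall>b\<in>N0. a = b" using card_le_Suc0_iff_eq[OF graphD(1)[OF g0]] by blast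
        have "c u = t" "c v = t" using all cN uv t(2) by auto
        then have "par (Inr (u, 1)) = z \<and> Inr (u, 1) \<in> X \<and> Inr (u, 1) \<in> NF'"
          "par (Inr (v, 1)) = z \<and> Inr (v, 1) \<in> X \<and> Inr (v, 1) \<in> NF'" using zpar uv by auto
        then have "EF' z (Inr (u, 1))" "EF' z (Inr (v, 1))" "Inr (u, 1) \<in> NF'" "Inr (v, 1) \<in> NF'"
          unfolding EF'_def by auto
        moreover have "(Inr (u, 1) :: 'b + 'a \<times> nat) \<noteq> Inr (v, 1)" using uv by simp
        ultimately show ?thesis using notleaf[of "Inr (u, 1)" "Inr (v, 1)" z] zl by blast
      qed
    qed
  next
    fix z assume "z \<in> \<tau>0 ` V"
    then obtain v where v: "v \<in> V" "z = \<tau>0 v" by blast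
    have zX: "z \<in> X" using \<tau>X v by simp
    have sub: "{y \<in> NF'. EF' z y} \<subseteq> {par z}"
    proof
      fix b assume "b \<in> {y \<in> NF'. EF' z y}"
      then have e: "EF' z b" by blast
      have "\<not> E1 z b" using E1_N XN zX by blast
      moreover have "\<not> (b \<in> X \<and> z = par b)"
      proof
        assume h: "b \<in> X \<and> z = par b"
        then obtain w j where b: "b = Inr (w, j)" "w \<in> V" "1 \<le> j" "j \<le> p w" unfolding X_iff by blast
        show False
        proof (cases "j \<le> 1")
          case True then show False using h b par1 v unfolding \<tau>0_def by simp
        next
          case False then show False using h b par1 v unfolding \<tau>0_def by auto
        qed
      qed
      ultimately show "b \<in> {par z}" using e unfolding EF'_def by blast
    qed
    have "card {y \<in> NF'. EF' z y} \<le> 1" using card_mono[OF _ sub] by simp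
    moreover have "z \<in> NF'" using zX unfolding NF'_def by blast
    ultimately show "z \<in> leaves NF' EF'" unfolding leaves_def by blast
  qed
  have distF: "tdist EF' (\<tau>0 u) (\<tau>0 v) = p u + p v + tdist E0 (c u) (c v)"
    if uv: "u \<in> V" "v \<in> V" "u \<noteq> v" for u v
  proof -
    have cu: "Inl (c u) \<in> N1" "Inl (c v) \<in> N1" using cN uv unfolding N1_def by auto
    obtain P where P: "path E1 P" "hd P = Inl (c u)" "last P = Inl (c v)" using tree_conn[OF T1 cu] by blast
    have Pne: "P \<noteq> []" using path_ne[OF P(1)] .
    have sP: "set P \<subseteq> N1" using wk_set_graph[OF g1] P cu by (auto simp: path_wk)
    have dP: "tdist E0 (c u) (c v) = length P - 1"
      using tree_PL[OF T1 P(1)] P cu R1(2) cN uv by auto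
    define U where "U w = map (\<lambda>i. Inr (w, i) :: 'b + 'a \<times> nat) [1..<Suc (p w)]" for w
    have U: "wk EF' (U w) \<and> distinct (U w) \<and> U w \<noteq> [] \<and> hd (U w) = Inr (w, 1) \<and> last (U w) = Inr (w, p w)
      \<and> set (U w) \<subseteq> X \<and> length (U w) = p w \<and> set (U w) \<subseteq> {Inr (w, i) | i. True}" if w: "w \<in> V" for w
    proof -
      have pw: "1 \<le> p w" using p1 w by blast
      have "wk EF' (U w)" unfolding U_def
      proof (rule wk_upt)
        show "1 < Suc (p w)" using pw by simp
      next
        fix i assume i: "1 \<le> i" "Suc i < Suc (p w)"
        have "Inr (w, Suc i) \<in> X" using XI w i by auto
        moreover have "par (Inr (w, Suc i)) = Inr (w, i)" using par1 i by simp
        ultimately show "EF' (Inr (w, i)) (Inr (w, Suc i))" unfolding EF'_def by auto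
      qed
      moreover have "distinct (U w)" unfolding U_def by (simp add: distinct_map inj_on_def)
      moreover have "U w \<noteq> []" unfolding U_def using pw by simp
      moreover have "hd (U w) = Inr (w, 1)" unfolding U_def using pw by (simp add: hd_map upt_rec)
      moreover have "last (U w) = Inr (w, p w)" unfolding U_def using pw by (simp add: last_map)
      moreover have "set (U w) \<subseteq> X" unfolding U_def using XI w by auto
      moreover have "length (U w) = p w" unfolding U_def by simp
      moreover have "set (U w) \<subseteq> {Inr (w, i) | i. True}" unfolding U_def by auto
      ultimately show ?thesis by blast
    qed
    note Uu = U[OF uv(1)] and Uv = U[OF uv(2)]
    define Q where "Q = rev (U u) @ P @ U v"
    have symF: "\<And>a b. EF' a b \<Longrightarrow> EF' b a" using graphD(5)[OF gF] by blast
    have wP: "wk EF' P" using P(1) unfolding path_wk EF'_def by (auto intro: wk_mono)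
    have e1: "EF' (Inl (c v)) (Inr (v, 1))" using XI uv p1 par1 unfolding EF'_def by auto
    have e2: "EF' (Inr (u, 1)) (Inl (c u))" using XI uv p1 par1 unfolding EF'_def by auto
    have wPU: "wk EF' (P @ U v)" using wk_append[OF Pne, of "U v"] Uv wP P e1 by simp
    have wr: "wk EF' (rev (U u))" using wk_rev[of EF', OF symF] Uu by blast
    have wQ: "wk EF' Q" unfolding Q_def
      using wk_append[of "rev (U u)" "P @ U v"] Uu wr wPU e2 P Pne
      by (simp add: last_rev)
    have dQ: "distinct Q" unfolding Q_def
    proof -
      have "set (U u) \<inter> set P = {}" "set (U v) \<inter> set P = {}" using Uu Uv sP XN by auto
      moreover have "set (U u) \<inter> set (U v) = {}" using Uu Uv uv(3) by blast
      ultimately show "distinct (rev (U u) @ P @ U v)" using Uu Uv P(1) by (auto simp: path_wk)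
    qed
    have hQ: "hd Q = \<tau>0 u" unfolding Q_def \<tau>0_def using Uu by (simp add: hd_rev)
    have lQ: "last Q = \<tau>0 v" unfolding Q_def \<tau>0_def using Uv by simp
    have pQ: "path EF' Q" using wQ dQ by (simp add: path_wk)
    have hN: "hd Q \<in> NF'" using hQ \<tau>X[OF uv(1)] unfolding NF'_def by simp
    have "tdist EF' (hd Q) (last Q) = length Q - 1" using tree_PL[OF TF pQ hN] .
    moreover have "length P \<ge> 1" using Pne by (cases P) auto
    moreover have "length Q = p u + length P + p v" using Uu Uv unfolding Q_def by simp
    ultimately show ?thesis using hQ lQ dP by simp
  qed
  obtain f :: "_ \<Rightarrow> nat" and n where f: "f ` NF' = {i. i < n}" "inj_on f NF'"
    using finite_imp_inj_to_nat_seg[OF finF] by blast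
  note R2 = tree_ren[OF TF f(2)]
  have leaves2: "leaves (f ` NF') (ren f NF' EF') = f ` leaves NF' EF'"
  proof (intro equalityI subsetI)
    fix z assume "z \<in> leaves (f ` NF') (ren f NF' EF')"
    then obtain x where x: "x \<in> NF'" "z = f x" "card {b \<in> f ` NF'. ren f NF' EF' (f x) b} \<le> 1"
      unfolding leaves_def by blast
    then show "z \<in> f ` leaves NF' EF'" using R2(3) unfolding leaves_def by auto
  next
    fix z assume "z \<in> f ` leaves NF' EF'"
    then obtain x where x: "x \<in> NF'" "z = f x" "card {y \<in> NF'. EF' x y} \<le> 1"
      unfolding leaves_def by blast
    then show "z \<in> leaves (f ` NF') (ren f NF' EF')" using R2(3) unfolding leaves_def by auto
  qed
  have injt: "inj_on \<tau>0 V" unfolding \<tau>0_def by (simp add: inj_on_def)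
  have tN: "\<tau>0 ` V \<subseteq> NF'" using \<tau>X unfolding NF'_def by blast
  have inj2: "inj_on (f \<circ> \<tau>0) V" using comp_inj_on[OF injt inj_on_subset[OF f(2) tN]] .
  have bij: "bij_betw (f \<circ> \<tau>0) V (leaves (f ` NF') (ren f NF' EF'))"
    unfolding bij_betw_def leaves2 leavesF using inj2 by (simp add: image_comp)
  show ?thesis
  proof (intro exI conjI)
    show "tree (f ` NF') (ren f NF' EF')" using R2(1) .
    show "bij_betw (f \<circ> \<tau>0) V (leaves (f ` NF') (ren f NF' EF'))" using bij .
    show "\<forall>u\<in>V. \<forall>v\<in>V. u \<noteq> v \<longrightarrow> tdist (ren f NF' EF') ((f \<circ> \<tau>0) u) ((f \<circ> \<tau>0) v) = p u + p v + tdist E0 (c u) (c v)"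
    proof (intro ballI impI)
      fix u v assume uv: "u \<in> V" "v \<in> V" "u \<noteq> v"
      have "\<tau>0 u \<in> NF'" "\<tau>0 v \<in> NF'" using tN uv by auto
      then have "tdist (ren f NF' EF') (f (\<tau>0 u)) (f (\<tau>0 v)) = tdist EF' (\<tau>0 u) (\<tau>0 v)" using R2(2) by blast
      then show "tdist (ren f NF' EF') ((f \<circ> \<tau>0) u) ((f \<circ> \<tau>0) v) = p u + p v + tdist E0 (c u) (c v)"
        using distF[OF uv] by simp
    qed
  qed
qed



lemma single_tree: "tree {0::nat} (\<lambda>_ _. False)"
proof (rule tree_intro)
  show "graph {0::nat} (\<lambda>_ _. False)" unfolding graph_def by simp
next
  fix x y :: nat assume "x \<in> {0}" "y \<in> {0}"
  then show "\<exists>p. path (\<lambda>_ _. False) p \<and> hd p = x \<and> last p = y"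
    by (intro exI[of _ "[0]"]) (simp add: path_wk)
next
  fix x y :: nat and p q
  assume h: "x \<in> {0}" "y \<in> {0}" "path (\<lambda>_ _. False) p" "hd p = x" "last p = y"
    "path (\<lambda>_ _. False) q" "hd q = x" "last q = y"
  have hp: "hd p = last p" "hd q = last q" using h by simp_all
  have "p = [hd p]" by (rule path_single[OF h(3) hp(1)])
  moreover have "q = [hd q]" by (rule path_single[OF h(6) hp(2)])
  moreover have "hd p = hd q" using h by simp
  ultimately show "p = q" by metis
qed

theorem lemma2:
  fixes V :: "'a set" and G :: "'a \<Rightarrow> 'a \<Rightarrow> bool"
    and N :: "'b set" and E :: "'b \<Rightarrow> 'b \<Rightarrow> bool" and S :: "'a \<Rightarrow> 'b set"
  assumes "graph V G"
    and "radial_subtree_model V G N E S"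
  shows "leaf_power V G"
proof -
  have gV: "graph V G" by fact
  have T: "tree N E"
    and adj: "\<forall>u\<in>V. \<forall>v\<in>V. u \<noteq> v \<longrightarrow> (S u \<inter> S v \<noteq> {} \<longleftrightarrow> G u v)"
    and rad: "\<forall>v\<in>V. \<exists>c\<in>N. \<exists>r::nat. S v = {t \<in> N. tdist E c t \<le> r}"
    using assms(2) unfolding radial_subtree_model_def subtree_model_def by blast+
  have "\<forall>v\<in>V. \<exists>c. c \<in> N \<and> (\<exists>r::nat. S v = {t \<in> N. tdist E c t \<le> r})" using rad by blast
  from bchoice[OF this] obtain c where c: "\<forall>v\<in>V. c v \<in> N \<and> (\<exists>r::nat. S v = {t \<in> N. tdist E (c v) t \<le> r})"
    by blast
  have "\<forall>v\<in>V. \<exists>r::nat. S v = {t \<in> N. tdist E (c v) t \<le> r}" using c by blast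
  from bchoice[OF this] obtain r where r: "\<forall>v\<in>V. S v = {t \<in> N. tdist E (c v) t \<le> (r v :: nat)}"
    by blast
  have cr: "\<forall>v\<in>V. c v \<in> N \<and> S v = {t \<in> N. tdist E (c v) t \<le> (r v :: nat)}" using c r by blast
  have key: "G u v = (tdist E (c u) (c v) \<le> r u + r v)" if uv: "u \<in> V" "v \<in> V" "u \<noteq> v" for u v
  proof -
    have "G u v = (S u \<inter> S v \<noteq> {})" using adj uv by blast
    also have "\<dots> = (tdist E (c u) (c v) \<le> r u + r v)"
    proof -
      have "c u \<in> N" "c v \<in> N" "S u = {t \<in> N. tdist E (c u) t \<le> r u}" "S v = {t \<in> N. tdist E (c v) t \<le> r v}"
        using cr uv by auto
      then show ?thesis using ball_meet[OF T, of "c u" "c v" "r u" "r v"] by simp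
    qed
    finally show ?thesis .
  qed
  have finV: "finite V" "V \<noteq> {}" using graphD(1,2)[OF gV] by auto
  show ?thesis
  proof (cases "2 \<le> card V")
    case False
    have "card V \<noteq> 0" using finV by simp
    then have "card V = 1" using False by simp
    then obtain v where V: "V = {v}" using card_1_singletonE by blast
    have lv: "leaves {0::nat} (\<lambda>_ _. False) = {0}" unfolding leaves_def by simp
    have "k_leaf_power 1 V G" unfolding k_leaf_power_def
    proof (intro exI conjI)
      show "tree {0::nat} (\<lambda>_ _. False)" by (rule single_tree)
      show "bij_betw (\<lambda>_. 0::nat) V (leaves {0::nat} (\<lambda>_ _. False))"
        unfolding lv V bij_betw_def by simp
      show "\<forall>u\<in>V. \<forall>w\<in>V. u \<noteq> w \<longrightarrow> G u w = (tdist (\<lambda>_ _. False) ((\<lambda>_. 0::nat) u) ((\<lambda>_. 0::nat) w) \<le> 1)"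
        using V by simp
    qed
    then show ?thesis unfolding leaf_power_def by blast
  next
    case True
    have CN: "c ` V \<subseteq> N" using cr by blast
    obtain N0 where N0: "c ` V \<subseteq> N0" "N0 \<subseteq> N" "tree N0 (restr E N0)"
      "\<forall>x\<in>N0. \<forall>y\<in>N0. tdist (restr E N0) x y = tdist E x y"
      "2 \<le> card N0 \<longrightarrow> (\<forall>x\<in>N0. card {y \<in> N0. restr E N0 x y} \<le> 1 \<longrightarrow> x \<in> c ` V)"
      using prune[OF T CN] by blast
    define L where "L = Max (r ` V)"
    have rL: "r v \<le> L" if "v \<in> V" for v unfolding L_def using finV that by simp
    define p where "p v = L + 1 - r v" for v
    have p1: "\<forall>v\<in>V. 1 \<le> p v"
    proof
      fix v assume "v \<in> V"
      then have "r v \<le> L" by (rule rL)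
      then show "1 \<le> p v" unfolding p_def by arith
    qed
    have cN: "\<forall>v\<in>V. c v \<in> N0" using N0(1) by blast
    obtain NF :: "nat set" and EF \<tau> where C: "tree NF EF" "bij_betw \<tau> V (leaves NF EF)"
      "\<forall>u\<in>V. \<forall>v\<in>V. u \<noteq> v \<longrightarrow> tdist EF (\<tau> u) (\<tau> v) = p u + p v + tdist (restr E N0) (c u) (c v)"
      using construct[OF N0(3) finV(1) True cN p1 N0(5)] by blast
    have "k_leaf_power (2 * L + 2) V G" unfolding k_leaf_power_def
    proof (intro exI conjI)
      show "tree NF EF" by fact
      show "bij_betw \<tau> V (leaves NF EF)" by fact
      show "\<forall>u\<in>V. \<forall>v\<in>V. u \<noteq> v \<longrightarrow> G u v = (tdist EF (\<tau> u) (\<tau> v) \<le> 2 * L + 2)"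
      proof (intro ballI impI)
        fix u v assume uv: "u \<in> V" "v \<in> V" "u \<noteq> v"
        have d: "tdist (restr E N0) (c u) (c v) = tdist E (c u) (c v)" using N0(4) cN uv by blast
        have "tdist EF (\<tau> u) (\<tau> v) = p u + p v + tdist E (c u) (c v)" using C(3) uv d by simp
        moreover have "r u \<le> L" "r v \<le> L" using rL uv by auto
        moreover have "p u = L + 1 - r u" "p v = L + 1 - r v" unfolding p_def by simp_all
        ultimately have "(tdist EF (\<tau> u) (\<tau> v) \<le> 2 * L + 2) = (tdist E (c u) (c v) \<le> r u + r v)"
          by arith
        then show "G u v = (tdist EF (\<tau> u) (\<tau> v) \<le> 2 * L + 2)"
          using key[OF uv] by simp
      qed
    qed
    then show ?thesis unfolding leaf_power_def by (intro exI[of _ "2 * L + 2"]) simp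
  qed
qed


end
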